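(* In the Hex plane, the p-area of every parallelogram equals base $\times$ height, where the base is the Hex-norm length of one side and the height is the Hex distance between the line containing that side and the line containing the opposite side.
   Context: Let $u_0=(1,0)$, $u_1=(-1/2,\sqrt3/2)$, $u_2=-u_0-u_1$, and let $H$ be the convex hull of $\{\pm u_0,\pm u_1,\pm u_2\}$. The Hex plane is $\mathbb R^2$ with the norm whose unit ball is $H$ and the induced metric. The p-area of a 2-dimensional normed space is $K^{-1}\lambda$ where $\lambda$ is Lebesgue measure from an inner product and $K$ is the supremum of $\lambda$-areas of parallelograms spanned by two vectors of norm $\le1$. *)

theory Defs
  imports "HOL-Analysis.Analysis"
begin

definition hex_u0 :: "real^2" where "hex_u0 = vector [1, 0]"
definition hex_u1 :: "real^2" where "hex_u1 = vector [-1/2, sqrt 3 / 2]"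
definition hex_u2 :: "real^2" where "hex_u2 = - hex_u0 - hex_u1"

definition hexH :: "(real^2) set" where
  "hexH = convex hull {hex_u0, - hex_u0, hex_u1, - hex_u1, hex_u2, - hex_u2}"

definition hex_norm :: "real^2 \<Rightarrow> real" where
  "hex_norm x = Inf {t. 0 < t \<and> x \<in> (\<lambda>y. t *\<^sub>R y) ` hexH}"

definition hex_dist :: "real^2 \<Rightarrow> real^2 \<Rightarrow> real" where
  "hex_dist x y = hex_norm (x - y)"

definition hex_setdist :: "(real^2) set \<Rightarrow> (real^2) set \<Rightarrow> real" where
  "hex_setdist A B = Inf {hex_dist x y | x y. x \<in> A \<and> y \<in> B}"

definition parallelogram :: "real^2 \<Rightarrow> real^2 \<Rightarrow> real^2 \<Rightarrow> (real^2) set" where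
  "parallelogram p a b = {p + s *\<^sub>R a + t *\<^sub>R b | s t. s \<in> {0..1} \<and> t \<in> {0..1}}"

definition line_through :: "real^2 \<Rightarrow> real^2 \<Rightarrow> (real^2) set" where
  "line_through p a = {p + s *\<^sub>R a | s. True}"

definition hex_K :: real where
  "hex_K = Sup {measure lebesgue (parallelogram 0 u v) | u v. hex_norm u \<le> 1 \<and> hex_norm v \<le> 1}"

text \<open>p-area (Holmes--Thompson type normalisation K^{-1} lambda).\<close>
definition p_area :: "(real^2) set \<Rightarrow> real" where
  "p_area S = measure lebesgue S / hex_K"

end

theory Submission
  imports Defs
begin


definition D2 :: "real^2 \<Rightarrow> real^2 \<Rightarrow> real" where
  "D2 x y = x$1 * y$2 - x$2 * y$1"

lemma par_measure:
  fixes p a b :: "real^2"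
  shows "measure lebesgue (parallelogram p a b) = \<bar>D2 a b\<bar>"
proof -
  define f :: "real^2 \<Rightarrow> real^2" where "f x = x$1 *\<^sub>R a + x$2 *\<^sub>R b" for x
  have lin: "linear f" unfolding f_def linear_iff by (auto simp: algebra_simps)
  have cb: "cbox (0::real^2) 1 \<in> lmeasurable" by simp
  have m1: "measure lebesgue (cbox (0::real^2) 1) = 1"
  proof -
    have "cbox (0::real^2) 1 \<noteq> {}" by (auto simp: box_ne_empty Basis_vec_def inner_axis cart_eq_inner_axis[symmetric])
    then show ?thesis by (simp add: content_cbox_cart)
  qed
  have box: "cbox (0::real^2) 1 = {x. 0 \<le> x$1 \<and> x$1 \<le> 1 \<and> 0 \<le> x$2 \<and> x$2 \<le> 1}"
    by (auto simp: mem_box_cart forall_2)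
  have img: "parallelogram p a b = (+) p ` (f ` cbox 0 1)"
  proof -
    have "parallelogram p a b = (\<lambda>x. p + f x) ` cbox 0 1"
      unfolding parallelogram_def box f_def
      apply (auto simp: image_def)
       apply (rule_tac x="vector [s,t]" in exI) apply simp
      apply force done
    then show ?thesis by (simp add: image_image)
  qed
  have det: "det (matrix f) = D2 a b"
    by (simp add: det_2 matrix_def f_def D2_def axis_def)
  show ?thesis
    unfolding img measure_translation using measure_linear_image[OF lin cb] m1 det by simp
qed


lemma tri2: "0 \<le> (u::real) \<Longrightarrow> 0 \<le> v \<Longrightarrow> \<bar>u * x + v * y\<bar> \<le> u * \<bar>x\<bar> + v * \<bar>y\<bar>"
  by (metis abs_mult abs_of_nonneg abs_triangle_ineq)
lemma tri2m: "0 \<le> (u::real) \<Longrightarrow> 0 \<le> v \<Longrightarrow> \<bar>u * x - v * y\<bar> \<le> u * \<bar>x\<bar> + v * \<bar>y\<bar>"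
  by (metis abs_mult abs_of_nonneg abs_triangle_ineq4)

definition M2 :: "real \<Rightarrow> real \<Rightarrow> real" where
  "M2 a b = max (max \<bar>a\<bar> \<bar>b\<bar>) \<bar>a - b\<bar>"

lemma M2_ineq: "\<bar>a * d - b * c\<bar> \<le> M2 a b * M2 c d"
proof -
  have key: "\<bar>a * d - b * c\<bar> \<le> M2 a b * M2 c d" if a0: "0 \<le> a" for a b c d :: real
  proof -
    let ?N = "M2 c d"
    have c: "\<bar>c\<bar> \<le> ?N" and d: "\<bar>d\<bar> \<le> ?N" and cd: "\<bar>d - c\<bar> \<le> ?N"
      by (auto simp: M2_def)
    consider "0 \<le> b" "b \<le> a" | "0 \<le> a" "a \<le> b" | "b \<le> 0" "0 \<le> a" using a0 by (cases "0 \<le> b"; cases "b \<le> a") auto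
    then show ?thesis
    proof cases
      case 1
      have e: "a * d - b * c = (a - b) * d + b * (d - c)" by algebra
      have "\<bar>(a - b) * d + b * (d - c)\<bar> \<le> (a - b) * \<bar>d\<bar> + b * \<bar>d - c\<bar>"
        using 1 by (intro tri2) auto
      also have "\<dots> \<le> (a - b) * ?N + b * ?N"
        using 1 d cd by (intro add_mono mult_left_mono) auto
      also have "\<dots> \<le> M2 a b * ?N" using 1 cd by (simp add: M2_def algebra_simps mult_right_mono)
      finally show ?thesis using e by simp
    next
      case 2
      have e: "a * d - b * c = a * (d - c) - (b - a) * c" by algebra
      have "\<bar>a * (d - c) - (b - a) * c\<bar> \<le> a * \<bar>d - c\<bar> + (b - a) * \<bar>c\<bar>"
        using 2 by (intro tri2m) auto
      also have "\<dots> \<le> a * ?N + (b - a) * ?N"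
        using 2 c cd by (intro add_mono mult_left_mono) auto
      also have "\<dots> \<le> M2 a b * ?N" using 2 cd by (simp add: M2_def algebra_simps mult_right_mono)
      finally show ?thesis using e by simp
    next
      case 3
      have "\<bar>a * d - b * c\<bar> \<le> a * \<bar>d\<bar> + (- b) * \<bar>c\<bar>"
        using 3 tri2[of a "-b" d c] by simp
      also have "\<dots> \<le> a * ?N + (-b) * ?N"
        using 3 c d by (intro add_mono mult_left_mono) auto
      also have "\<dots> \<le> M2 a b * ?N" using 3 cd by (simp add: M2_def algebra_simps mult_right_mono)
      finally show ?thesis .
    qed
  qed
  show ?thesis
  proof (cases "0 \<le> a")
    case True then show ?thesis using key by blast
  next
    case False
    have "\<bar>(-a) * d - (-b) * c\<bar> \<le> M2 (-a) (-b) * M2 c d" using False by (intro key) auto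
    moreover have "M2 (-a) (-b) = M2 a b" by (simp add: M2_def abs_minus_commute)
    ultimately show ?thesis by (simp add: abs_minus_commute algebra_simps)
  qed
qed


abbreviation "r3 \<equiv> sqrt (3::real)"

definition hal :: "real^2 \<Rightarrow> real" where "hal x = x$1 + x$2 / r3"
definition hbe :: "real^2 \<Rightarrow> real" where "hbe x = 2 * x$2 / r3"
definition NN :: "real^2 \<Rightarrow> real" where "NN x = M2 (hal x) (hbe x)"

lemma r3_pos: "r3 > 0" by simp
lemma r3_sq: "r3 * r3 = 3" by simp

lemma hal_lin: "hal (u *\<^sub>R x + v *\<^sub>R y) = u * hal x + v * hal y"
  by (simp add: hal_def algebra_simps add_divide_distrib)
lemma hbe_lin: "hbe (u *\<^sub>R x + v *\<^sub>R y) = u * hbe x + v * hbe y"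
  by (simp add: hbe_def algebra_simps add_divide_distrib)
lemma hal_scale: "hal (u *\<^sub>R x) = u * hal x" using hal_lin[of u x 0 x] by simp
lemma hbe_scale: "hbe (u *\<^sub>R x) = u * hbe x" using hbe_lin[of u x 0 x] by simp

lemma hex_decomp: "x = hal x *\<^sub>R hex_u0 + hbe x *\<^sub>R hex_u1"
  by (simp add: vec_eq_iff forall_2 hal_def hbe_def hex_u0_def hex_u1_def field_simps)

lemma NN_nonneg: "NN x \<ge> 0" by (simp add: NN_def M2_def)

lemma M2_scale: "0 \<le> t \<Longrightarrow> M2 (t * a) (t * b) = t * M2 a b"
proof -
  assume t: "0 \<le> t"
  have "\<bar>t * a - t * b\<bar> = t * \<bar>a - b\<bar>" using t by (simp add: abs_mult flip: right_diff_distrib)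
  then show ?thesis using t by (simp add: M2_def abs_mult max_mult_distrib_left)
qed

lemma NN_scale: "0 \<le> t \<Longrightarrow> NN (t *\<^sub>R x) = t * NN x"
  by (simp add: NN_def hal_scale hbe_scale M2_scale)

lemma M2_conv: "0 \<le> u \<Longrightarrow> 0 \<le> v \<Longrightarrow> M2 (u * a + v * c) (u * b + v * d) \<le> u * M2 a b + v * M2 c d"
proof -
  assume u: "0 \<le> u" and v: "0 \<le> v"
  have A: "\<bar>u * a + v * c\<bar> \<le> u * \<bar>a\<bar> + v * \<bar>c\<bar>" using u v by (intro tri2)
  have B: "\<bar>u * b + v * d\<bar> \<le> u * \<bar>b\<bar> + v * \<bar>d\<bar>" using u v by (intro tri2)
  have C: "\<bar>(u * a + v * c) - (u * b + v * d)\<bar> \<le> u * \<bar>a-b\<bar> + v * \<bar>c-d\<bar>"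
  proof -
    have "(u * a + v * c) - (u * b + v * d) = u * (a-b) + v * (c-d)" by algebra
    then show ?thesis using u v tri2[of u v "a-b" "c-d"] by simp
  qed
  have m1: "\<bar>a\<bar> \<le> M2 a b" "\<bar>b\<bar> \<le> M2 a b" "\<bar>a-b\<bar> \<le> M2 a b"
    unfolding M2_def by linarith+
  have m2: "\<bar>c\<bar> \<le> M2 c d" "\<bar>d\<bar> \<le> M2 c d" "\<bar>c-d\<bar> \<le> M2 c d"
    unfolding M2_def by linarith+
  have 1: "u * \<bar>a\<bar> \<le> u * M2 a b" "u * \<bar>b\<bar> \<le> u * M2 a b" "u * \<bar>a-b\<bar> \<le> u * M2 a b"
    using u m1 by (simp_all add: mult_left_mono)
  have 2: "v * \<bar>c\<bar> \<le> v * M2 c d" "v * \<bar>d\<bar> \<le> v * M2 c d" "v * \<bar>c-d\<bar> \<le> v * M2 c d"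
    using v m2 by (simp_all add: mult_left_mono)
  have r1: "\<bar>u * a + v * c\<bar> \<le> u * M2 a b + v * M2 c d" using A 1(1) 2(1) by linarith
  have r2: "\<bar>u * b + v * d\<bar> \<le> u * M2 a b + v * M2 c d" using B 1(2) 2(2) by linarith
  have r3: "\<bar>(u * a + v * c) - (u * b + v * d)\<bar> \<le> u * M2 a b + v * M2 c d" using C 1(3) 2(3) by linarith
  show ?thesis unfolding M2_def[of "u * a + v * c"] using r1 r2 r3 by simp
qed

lemma NN_conv: "0 \<le> u \<Longrightarrow> 0 \<le> v \<Longrightarrow> NN (u *\<^sub>R x + v *\<^sub>R y) \<le> u * NN x + v * NN y"
  by (simp add: NN_def hal_lin hbe_lin M2_conv)

lemma convex_NN: "convex {x. NN x \<le> 1}"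
  unfolding convex_def
proof (intro allI impI ballI, simp)
  fix x y :: "real^2" and u v :: real
  assume "NN x \<le> 1" "NN y \<le> 1" "0 \<le> u" "0 \<le> v" "u + v = 1"
  then have "u * NN x + v * NN y \<le> u * 1 + v * 1" by (intro add_mono mult_left_mono) auto
  then show "NN (u *\<^sub>R x + v *\<^sub>R y) \<le> 1" using NN_conv[of u v x y] \<open>u+v=1\<close> \<open>0\<le>u\<close> \<open>0\<le>v\<close> by linarith
qed

lemma hal_u: "hal hex_u0 = 1" "hbe hex_u0 = 0" "hal hex_u1 = 0" "hbe hex_u1 = 1"
     "hal hex_u2 = -1" "hbe hex_u2 = -1"
  by (simp_all add: hal_def hbe_def hex_u0_def hex_u1_def hex_u2_def field_simps)

lemma hal_neg: "hal (-x) = - hal x" "hbe (-x) = - hbe x"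
  using hal_scale[of "-1" x] hbe_scale[of "-1" x] by simp_all

lemma NN_u: "NN hex_u0 = 1" "NN hex_u1 = 1" "NN hex_u2 = 1"
  "NN (-hex_u0) = 1" "NN (-hex_u1) = 1" "NN (-hex_u2) = 1"
  by (simp_all add: NN_def hal_u hal_neg M2_def)

lemma tri_conv:
  fixes S :: "(real^2) set"
  assumes "convex S" "0 \<in> S" "p \<in> S" "q \<in> S" "0 \<le> c1" "0 \<le> c2" "c1 + c2 \<le> 1"
  shows "c1 *\<^sub>R p + c2 *\<^sub>R q \<in> S"
proof (cases "c1 + c2 = 0")
  case True then have "c1 = 0" "c2 = 0" using assms by linarith+
  then show ?thesis using assms by simp
next
  case False
  let ?s = "c1 + c2"
  have s: "?s > 0" using False assms by linarith
  define z where "z = (c1 / ?s) *\<^sub>R p + (c2 / ?s) *\<^sub>R q"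
  have z: "z \<in> S" unfolding z_def using assms s
    by (intro convexD[OF assms(1)]) (auto simp: add_divide_distrib[symmetric])
  have "?s *\<^sub>R z + (1 - ?s) *\<^sub>R 0 \<in> S" using assms z s by (intro convexD) auto
  moreover have "?s *\<^sub>R z + (1 - ?s) *\<^sub>R 0 = c1 *\<^sub>R p + c2 *\<^sub>R q"
    using s by (simp add: z_def scaleR_add_right)
  ultimately show ?thesis by simp
qed

lemma hexH_eq: "hexH = {x. NN x \<le> 1}"
proof
  show "hexH \<subseteq> {x. NN x \<le> 1}"
    unfolding hexH_def by (rule hull_minimal) (auto simp: NN_u convex_NN)
next
  show "{x. NN x \<le> 1} \<subseteq> hexH"
  proof
    fix x :: "real^2" assume "x \<in> {x. NN x \<le> 1}"
    then have n: "\<bar>hal x\<bar> \<le> 1" "\<bar>hbe x\<bar> \<le> 1" "\<bar>hal x - hbe x\<bar> \<le> 1"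
      by (auto simp: NN_def M2_def)
    let ?a = "hal x" and ?b = "hbe x"
    have cv: "convex hexH" unfolding hexH_def by simp
    have P: "hex_u0 \<in> hexH" "-hex_u0 \<in> hexH" "hex_u1 \<in> hexH" "-hex_u1 \<in> hexH"
      "hex_u2 \<in> hexH" "-hex_u2 \<in> hexH"
      unfolding hexH_def by (auto intro: hull_inc)
    have Z: "0 \<in> hexH"
    proof -
      have "(1/2) *\<^sub>R hex_u0 + (1/2) *\<^sub>R (-hex_u0) \<in> hexH" using P by (intro convexD[OF cv]) auto
      then show ?thesis by simp
    qed
    have x: "x = ?a *\<^sub>R hex_u0 + ?b *\<^sub>R hex_u1" by (rule hex_decomp)
    have u2: "hex_u2 = - hex_u0 - hex_u1" by (simp add: hex_u2_def)
    consider "0 \<le> ?b" "?b \<le> ?a" | "0 \<le> ?a" "?a \<le> ?b" | "?a \<le> 0" "0 \<le> ?b"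
      | "?b \<le> ?a" "?a \<le> 0" | "?a \<le> ?b" "?b \<le> 0" | "?b \<le> 0" "0 \<le> ?a" by linarith
    then show "x \<in> hexH"
    proof cases
      case 1
      have "x = (?a - ?b) *\<^sub>R hex_u0 + ?b *\<^sub>R (- hex_u2)" by (subst x) (simp add: u2 algebra_simps)
      also have "\<dots> \<in> hexH" using 1 n by (intro tri_conv[OF cv Z P(1) P(6)]) auto
      finally show ?thesis .
    next
      case 2
      have "x = ?a *\<^sub>R (- hex_u2) + (?b - ?a) *\<^sub>R hex_u1" by (subst x) (simp add: u2 algebra_simps)
      also have "\<dots> \<in> hexH" using 2 n by (intro tri_conv[OF cv Z P(6) P(3)]) auto
      finally show ?thesis .
    next
      case 3
      have "x = (- ?a) *\<^sub>R (- hex_u0) + ?b *\<^sub>R hex_u1" by (subst x) (simp add: u2 algebra_simps)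
      also have "\<dots> \<in> hexH" using 3 n by (intro tri_conv[OF cv Z P(2) P(3)]) auto
      finally show ?thesis .
    next
      case 4
      have "x = (- ?a) *\<^sub>R hex_u2 + (?a - ?b) *\<^sub>R (- hex_u1)" by (subst x) (simp add: u2 algebra_simps)
      also have "\<dots> \<in> hexH" using 4 n by (intro tri_conv[OF cv Z P(5) P(4)]) auto
      finally show ?thesis .
    next
      case 5
      have "x = (?b - ?a) *\<^sub>R (- hex_u0) + (- ?b) *\<^sub>R hex_u2" by (subst x) (simp add: u2 algebra_simps)
      also have "\<dots> \<in> hexH" using 5 n by (intro tri_conv[OF cv Z P(2) P(5)]) auto
      finally show ?thesis .
    next
      case 6
      have "x = ?a *\<^sub>R hex_u0 + (- ?b) *\<^sub>R (- hex_u1)" by (subst x) (simp add: u2 algebra_simps)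
      also have "\<dots> \<in> hexH" using 6 n by (intro tri_conv[OF cv Z P(1) P(4)]) auto
      finally show ?thesis .
    qed
  qed
qed

lemma hex_norm_eq: "hex_norm x = NN x"
proof -
  have mem: "x \<in> (\<lambda>y. t *\<^sub>R y) ` hexH \<longleftrightarrow> NN x \<le> t" if t: "0 < t" for t
  proof
    assume "x \<in> (\<lambda>y. t *\<^sub>R y) ` hexH"
    then obtain y where "NN y \<le> 1" "x = t *\<^sub>R y" by (auto simp: hexH_eq)
    then show "NN x \<le> t" using t NN_scale[of t y] by (simp add: mult_left_le)
  next
    assume "NN x \<le> t"
    then have "NN ((1/t) *\<^sub>R x) \<le> 1" using t NN_scale[of "1/t" x] by simp
    moreover have "x = t *\<^sub>R ((1/t) *\<^sub>R x)" using t by simp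
    ultimately show "x \<in> (\<lambda>y. t *\<^sub>R y) ` hexH" unfolding hexH_eq by blast
  qed
  have "{t. 0 < t \<and> x \<in> (\<lambda>y. t *\<^sub>R y) ` hexH} = {t. 0 < t \<and> NN x \<le> t}"
    using mem by blast
  moreover have "Inf {t. 0 < t \<and> NN x \<le> t} = NN x"
  proof (cases "NN x = 0")
    case True
    then have "{t. 0 < t \<and> NN x \<le> t} = {0<..}" by auto
    then show ?thesis using True by simp
  next
    case False
    then have "{t. 0 < t \<and> NN x \<le> t} = {NN x..}" using NN_nonneg[of x] by auto
    then show ?thesis by simp
  qed
  ultimately show ?thesis unfolding hex_norm_def by simp
qed


lemma D2_hex: "D2 x y = (r3/2) * (hal x * hbe y - hbe x * hal y)"
proof -
  have e: "r3 * (r3 * z) = 3 * z" for z by (simp add: mult.assoc[symmetric])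
  show ?thesis unfolding D2_def hal_def hbe_def by (simp add: field_simps e)
qed

lemma D2_ineq: "\<bar>D2 x y\<bar> \<le> (r3/2) * NN x * NN y"
proof -
  have "\<bar>D2 x y\<bar> = (r3/2) * \<bar>hal x * hbe y - hbe x * hal y\<bar>" by (simp add: D2_hex abs_mult)
  also have "\<dots> \<le> (r3/2) * (NN x * NN y)" unfolding NN_def by (intro mult_left_mono M2_ineq) auto
  finally show ?thesis by simp
qed

lemma NN_neg: "NN (-x) = NN x"
  by (simp add: NN_def hal_neg M2_def abs_minus_commute)

lemma NN_scale_abs: "NN (t *\<^sub>R x) = \<bar>t\<bar> * NN x"
proof (cases "0 \<le> t")
  case True then show ?thesis by (simp add: NN_scale)
next
  case False
  have "NN (t *\<^sub>R x) = NN ((-t) *\<^sub>R x)" by (metis NN_neg scaleR_minus_left)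
  also have "\<dots> = (-t) * NN x" using False by (intro NN_scale) auto
  finally show ?thesis using False by simp
qed

lemma NN_ge: "\<bar>hal x\<bar> \<le> NN x" "\<bar>hbe x\<bar> \<le> NN x" "\<bar>hal x - hbe x\<bar> \<le> NN x"
  by (simp_all add: NN_def M2_def)

lemma NN_pos: "a \<noteq> 0 \<Longrightarrow> NN a > 0"
proof -
  assume a: "a \<noteq> 0"
  show ?thesis
  proof (rule ccontr)
    assume "\<not> NN a > 0"
    then have "NN a = 0" using NN_nonneg[of a] by linarith
    then have "hal a = 0" "hbe a = 0" using NN_ge[of a] by linarith+
    then have "a = 0" using hex_decomp[of a] by simp
    then show False using a by simp
  qed
qed

lemma D2_u: "D2 a hex_u0 = -(r3/2) * hbe a" "D2 a hex_u1 = (r3/2) * hal a"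
   "D2 a hex_u2 = (r3/2) * (hbe a - hal a)"
  by (simp_all add: D2_hex hal_u algebra_simps)

lemma attain: "\<exists>g. NN g = 1 \<and> \<bar>D2 a g\<bar> = (r3/2) * NN a"
proof -
  have "NN a = \<bar>hal a\<bar> \<or> NN a = \<bar>hbe a\<bar> \<or> NN a = \<bar>hal a - hbe a\<bar>"
    unfolding NN_def M2_def max_def by auto
  then show ?thesis
  proof (elim disjE)
    assume "NN a = \<bar>hal a\<bar>" then show ?thesis
      by (intro exI[of _ hex_u1]) (simp add: NN_u D2_u abs_mult)
  next
    assume "NN a = \<bar>hbe a\<bar>" then show ?thesis
      by (intro exI[of _ hex_u0]) (simp add: NN_u D2_u abs_mult)
  next
    assume "NN a = \<bar>hal a - hbe a\<bar>" then show ?thesis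
      by (intro exI[of _ hex_u2]) (simp add: NN_u D2_u abs_mult abs_minus_commute)
  qed
qed

lemma D2_zero_span: "a \<noteq> 0 \<Longrightarrow> D2 a z = 0 \<Longrightarrow> \<exists>s. z = s *\<^sub>R a"
proof -
  assume a: "a \<noteq> 0" and d: "D2 a z = 0"
  then have d': "a$1 * z$2 = a$2 * z$1" by (simp add: D2_def)
  show ?thesis
  proof (cases "a$1 = 0")
    case False
    have "z = (z$1 / a$1) *\<^sub>R a" using False d'
      by (simp add: vec_eq_iff forall_2 field_simps)
    then show ?thesis by blast
  next
    case True
    then have "a$2 \<noteq> 0" using a by (auto simp: vec_eq_iff forall_2)
    have "z = (z$2 / a$2) *\<^sub>R a" using True d' \<open>a$2 \<noteq> 0\<close>
      by (simp add: vec_eq_iff forall_2 field_simps)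
    then show ?thesis by blast
  qed
qed

lemma D2_lin: "D2 a (x + y) = D2 a x + D2 a y" "D2 a (t *\<^sub>R x) = t * D2 a x"
   "D2 a (-x) = - D2 a x" "D2 a (x - y) = D2 a x - D2 a y" "D2 a a = 0"
  by (simp_all add: D2_def algebra_simps)

lemma setdist_eq:
  fixes p a b :: "real^2"
  assumes a: "a \<noteq> 0"
  shows "hex_setdist (line_through p a) (line_through (p + b) a) = \<bar>D2 a b\<bar> / ((r3/2) * NN a)"
proof -
  let ?m = "\<bar>D2 a b\<bar> / ((r3/2) * NN a)"
  let ?S = "{hex_dist x y |x y. x \<in> line_through p a \<and> y \<in> line_through (p + b) a}"
  have pos: "(r3/2) * NN a > 0" using NN_pos[OF a] by simp
  have lower: "?m \<le> z" if "z \<in> ?S" for z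
  proof -
    obtain s t where z: "z = NN ((p + s *\<^sub>R a) - (p + b + t *\<^sub>R a))"
      using \<open>z \<in> ?S\<close> by (auto simp: line_through_def hex_dist_def hex_norm_eq)
    let ?w = "(p + s *\<^sub>R a) - (p + b + t *\<^sub>R a)"
    have "D2 a ?w = - D2 a b" by (simp add: D2_lin algebra_simps)
    then have "\<bar>D2 a b\<bar> \<le> (r3/2) * NN a * z" using D2_ineq[of a ?w] z by simp
    then show ?thesis using pos by (simp add: divide_le_eq mult.commute)
  qed
  obtain g where g: "NN g = 1" "\<bar>D2 a g\<bar> = (r3/2) * NN a" using attain by blast
  have dg: "D2 a g \<noteq> 0" using g pos by auto
  define lam where "lam = D2 a b / D2 a g"
  define c where "c = - (lam *\<^sub>R g)"
  have "D2 a (b + c) = 0" using dg by (simp add: c_def lam_def D2_lin)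
  then obtain s where s: "b + c = s *\<^sub>R a" using D2_zero_span[OF a] by blast
  have "NN c = \<bar>D2 a b\<bar> / \<bar>D2 a g\<bar>" using g(1)
    by (simp add: c_def NN_neg NN_scale_abs lam_def abs_divide)
  then have Nc: "NN c = ?m" unfolding g(2) .
  have "NN c \<in> ?S"
  proof -
    have "p + s *\<^sub>R a \<in> line_through p a" by (auto simp: line_through_def)
    moreover have "p + b \<in> line_through (p + b) a"
      by (auto simp: line_through_def intro!: exI[of _ 0])
    moreover have "hex_dist (p + s *\<^sub>R a) (p + b) = NN c"
      using s by (simp add: hex_dist_def hex_norm_eq algebra_simps flip: s)
    ultimately show ?thesis by (metis (mono_tags, lifting) mem_Collect_eq)
  qed
  then have "Inf ?S = ?m" using lower Nc by (intro cInf_eq_minimum) auto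
  then show ?thesis unfolding hex_setdist_def .
qed

lemma hex_K_eq: "hex_K = r3 / 2"
proof -
  let ?S = "{measure lebesgue (parallelogram 0 u v) |u v. hex_norm u \<le> 1 \<and> hex_norm v \<le> 1}"
  have "r3/2 \<in> ?S"
  proof -
    have "D2 hex_u0 hex_u1 = r3/2" by (simp add: D2_def hex_u0_def hex_u1_def)
    then have "\<bar>D2 hex_u0 hex_u1\<bar> = r3/2" by (simp only: abs_of_nonneg[of "r3/2"]) simp
    then have m: "r3/2 = measure lebesgue (parallelogram 0 hex_u0 hex_u1)" by (simp only: par_measure)
    have n: "hex_norm hex_u0 \<le> 1" "hex_norm hex_u1 \<le> 1" by (simp_all add: hex_norm_eq NN_u)
    show ?thesis unfolding mem_Collect_eq
      by (rule exI[of _ hex_u0], rule exI[of _ hex_u1]) (use m n in simp)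
  qed
  moreover have "z \<le> r3/2" if zS: "z \<in> ?S" for z
  proof -
    obtain u v where z: "z = \<bar>D2 u v\<bar>" "NN u \<le> 1" "NN v \<le> 1"
      using zS by (auto simp: par_measure hex_norm_eq)
    have "(r3/2) * NN u * NN v \<le> (r3/2) * 1 * 1"
      using z NN_nonneg[of u] NN_nonneg[of v] by (intro mult_mono) auto
    then have h: "(r3/2) * NN u * NN v \<le> r3/2" by simp
    show ?thesis using D2_ineq[of u v] z(1) h by linarith
  qed
  ultimately show ?thesis unfolding hex_K_def by (intro cSup_eq_maximum) auto
qed

theorem lemma2p5:
  fixes p a b :: "real^2"
  assumes "a \<noteq> 0" and "b \<notin> span {a}"
  shows "p_area (parallelogram p a b)
           = hex_norm a * hex_setdist (line_through p a) (line_through (p + b) a)"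
proof -
  have pos: "NN a > 0" using NN_pos[OF assms(1)] .
  show ?thesis
    unfolding p_area_def par_measure hex_K_eq setdist_eq[OF assms(1)] hex_norm_eq
    using pos by (simp add: field_simps)
qed

end
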